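(* Let $m,n\in\mathbb{Z}_{>0}$ with $m\ge n$, let $\psi:\mathcal{G}^{(m,n)}\to\mathbb{C}$ be a Whittaker function with $\psi(I_{m+n-1})\psi(J_{m+n-1})\ne0$, and let $W'=\mathrm{Ind}_{\mathcal{G}^{(m,n)}}^{\mathcal{G}^{(m,0)}}\mathbb{C}w_\psi$. Let $w\in W'\setminus\mathbb{C}w_\psi$ and let $\deg(w)=(\mathbf{j},\mathbf{i})$. Then: (1) If $\mathbf{j}\neq\mathbf{0}$ and $r=\min\{k: j_k\neq0\}$, then $\deg\big((H_{m+n-1-r}-\psi(H_{m+n-1-r}))w\big)=(\mathbf{j}-\epsilon_r,\mathbf{i})$. (2) If $\mathbf{j}=\mathbf{0}$, $\mathbf{i}\ne\mathbf{0}$ and $s=\max\{k: i_k\ne0\}$, then $\deg\big((H_{m+n-1-s}-\psi(H_{m+n-1-s}))w\big)=(\mathbf{0},\mathbf{i}-\epsilon_s)$ or $\deg\big((L_{m+n-1-s}-\psi(L_{m+n-1-s}))w\big)=(\mathbf{0},\mathbf{i}-\epsilon_s)$.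
   Context: $\mathcal{G}$ is the complex Lie algebra with basis $\{L_n,H_n,I_n,J_n,\mathbf{c}_1,\mathbf{c}_2,\mathbf{c}_3: n\in\mathbb{Z}\}$ whose brackets of basis elements are $[L_m,L_n]=(n-m)L_{m+n}+\frac{m^3-m}{12}\delta_{m+n,0}\mathbf{c}_1$, $[L_m,H_n]=nH_{m+n}+m^2\delta_{m+n,0}\mathbf{c}_2$, $[H_m,H_n]=m\delta_{m+n,0}\mathbf{c}_3$, $[L_m,I_n]=(n-m)I_{m+n}$, $[L_m,J_n]=(n-m)J_{m+n}$, $[H_m,I_n]=I_{m+n}$, $[H_m,J_n]=-J_{m+n}$ (and antisymmetric counterparts), all other brackets of basis elements zero. For $m,n\ge0$, $\mathcal{G}^{(m,n)}=\sum_{i\ge0}(\mathbb{C}L_{m+i}+\mathbb{C}H_{m+i}+\mathbb{C}I_{n+i}+\mathbb{C}J_{n+i})+\sum_{k=1}^3\mathbb{C}\mathbf{c}_k$. A Whittaker function is a Lie homomorphism $\psi:\mathcal{G}^{(m,n)}\to\mathbb{C}$, $\mathbb{C}w_\psi$ the corresponding one-dimensional module, and $W'=\mathcal{U}(\mathcal{G}^{(m,0)})\otimes_{\mathcal{U}(\mathcal{G}^{(m,n)})}\mathbb{C}w_\psi$. Orders and degree: for $l\in\mathbb{Z}_{>0}$, elements of $\mathbb{N}^l$ are written $\mathbf{i}=(i_{l-1},\dots,i_1,i_0)$; $\epsilon_k$ has $1$ in the position of index $k$ and $0$ elsewhere; the weight is $\mathbf{w}(\mathbf{i})=\sum_{k=0}^{l-1}(l-k)i_k$.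 On $\mathbb{N}^l$, $\mathbf{i}\succ\mathbf{j}$ iff there is $k$ with $i_k>j_k$ and $i_s=j_s$ for all $s<k$. On $\mathbb{N}^l\times\mathbb{N}^l$ define the total order $(\mathbf{j},\mathbf{i})\succ(\mathbf{j}',\mathbf{i}')$ iff either $\mathbf{w}(\mathbf{j})+\mathbf{w}(\mathbf{i})>\mathbf{w}(\mathbf{j}')+\mathbf{w}(\mathbf{i}')$, or these weights are equal and $\mathbf{i}\succ\mathbf{i}'$, or the weights are equal, $\mathbf{i}=\mathbf{i}'$ and $\mathbf{j}\succ\mathbf{j}'$. Take $l=n$ and for $\mathbf{j},\mathbf{i}\in\mathbb{N}^n$ set $J^{\mathbf{j}}I^{\mathbf{i}}=J_{n-1}^{j_{n-1}}\cdots J_0^{j_0}I_{n-1}^{i_{n-1}}\cdots I_0^{i_0}$. By PBW every $w\in W'$ is uniquely $\sum_{\mathbf{j},\mathbf{i}}J^{\mathbf{j}}I^{\mathbf{i}}w_{\mathbf{j},\mathbf{i}}$ with $w_{\mathbf{j},\mathbf{i}}\in\mathbb{C}w_\psi$, finitely many nonzero; for $w\ne0$, $\deg(w)$ is the $\succ$-maximal $(\mathbf{j},\mathbf{i})$ with $w_{\mathbf{j},\mathbf{i}}\ne0$. *)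

theory Defs
  imports Complex_Main
begin

text \<open>Basis of the Lie algebra G: L_k, H_k, I_k, J_k (k integer) and the central c_1, c_2, c_3.\<close>
datatype gb = L int | H int | I int | J int | C1 | C2 | C3

fun brk :: "gb \<Rightarrow> gb \<Rightarrow> (complex \<times> gb) list" where
  "brk (L a) (L b) = [(of_int (b - a), L (a + b))]
      @ (if a + b = 0 then [((of_int a ^ 3 - of_int a) / 12, C1)] else [])"
| "brk (L a) (H b) = [(of_int b, H (a + b))] @ (if a + b = 0 then [(of_int a ^ 2, C2)] else [])"
| "brk (H b) (L a) = [(- of_int b, H (a + b))] @ (if a + b = 0 then [(- (of_int a ^ 2), C2)] else [])"
| "brk (H a) (H b) = (if a + b = 0 then [(of_int a, C3)] else [])"
| "brk (L a) (I b) = [(of_int (b - a), I (a + b))]"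
| "brk (I b) (L a) = [(- of_int (b - a), I (a + b))]"
| "brk (L a) (J b) = [(of_int (b - a), J (a + b))]"
| "brk (J b) (L a) = [(- of_int (b - a), J (a + b))]"
| "brk (H a) (I b) = [(1, I (a + b))]"
| "brk (I b) (H a) = [(-1, I (a + b))]"
| "brk (H a) (J b) = [(-1, J (a + b))]"
| "brk (J b) (H a) = [(1, J (a + b))]"
| "brk _ _ = []"

fun in_G :: "nat \<Rightarrow> nat \<Rightarrow> gb \<Rightarrow> bool" where
  "in_G m n (L k) = (k \<ge> int m)"
| "in_G m n (H k) = (k \<ge> int m)"
| "in_G m n (I k) = (k \<ge> int n)"
| "in_G m n (J k) = (k \<ge> int n)"
| "in_G m n _ = True"

text \<open>Whittaker function: a Lie homomorphism G^(m,n) -> C, given by its values on the basis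
  (extended linearly); it must vanish on brackets.\<close>
definition whittaker :: "nat \<Rightarrow> nat \<Rightarrow> (gb \<Rightarrow> complex) \<Rightarrow> bool" where
  "whittaker m n \<psi> \<longleftrightarrow>
     (\<forall>a b. in_G m n a \<longrightarrow> in_G m n b \<longrightarrow> (\<Sum>(c, e)\<leftarrow>brk a b. c * \<psi> e) = 0)"

text \<open>A module over G^(m,0) on the complex vector space ('v, sc): action \<rho> given on basis
  elements, each acting linearly, with the bracket relations.\<close>
definition lie_module :: "nat \<Rightarrow> (complex \<Rightarrow> 'v::ab_group_add \<Rightarrow> 'v) \<Rightarrow> (gb \<Rightarrow> 'v \<Rightarrow> 'v) \<Rightarrow> bool" where
  "lie_module m sc \<rho> \<longleftrightarrow> Vector_Spaces.vector_space sc \<and>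
     (\<forall>a. in_G m 0 a \<longrightarrow> Vector_Spaces.linear sc sc (\<rho> a)) \<and>
     (\<forall>a b v. in_G m 0 a \<longrightarrow> in_G m 0 b \<longrightarrow>
        \<rho> a (\<rho> b v) - \<rho> b (\<rho> a v) = (\<Sum>(c, e)\<leftarrow>brk a b. sc c (\<rho> e v)))"

text \<open>Multi-indices in N^n: functions nat => nat vanishing from n on; i k is i_k.\<close>
definition idx :: "nat \<Rightarrow> (nat \<Rightarrow> nat) set" where
  "idx n = {i. \<forall>k\<ge>n. i k = 0}"

definition eps :: "nat \<Rightarrow> nat \<Rightarrow> nat" where
  "eps r = (\<lambda>k. if k = r then 1 else 0)"

fun powX :: "(int \<Rightarrow> gb) \<Rightarrow> (gb \<Rightarrow> 'v \<Rightarrow> 'v) \<Rightarrow> (nat \<Rightarrow> nat) \<Rightarrow> nat \<Rightarrow> 'v \<Rightarrow> 'v" where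
  "powX X \<rho> i 0 v = v"
| "powX X \<rho> i (Suc k) v = (\<rho> (X (int k)) ^^ i k) (powX X \<rho> i k v)"

definition mono :: "(gb \<Rightarrow> 'v \<Rightarrow> 'v) \<Rightarrow> nat \<Rightarrow> (nat \<Rightarrow> nat) \<Rightarrow> (nat \<Rightarrow> nat) \<Rightarrow> 'v \<Rightarrow> 'v" where
  "mono \<rho> n j i v = powX J \<rho> j n (powX I \<rho> i n v)"

definition repr :: "nat \<Rightarrow> (complex \<Rightarrow> 'v::ab_group_add \<Rightarrow> 'v) \<Rightarrow> (gb \<Rightarrow> 'v \<Rightarrow> 'v) \<Rightarrow> 'v \<Rightarrow> 'v
    \<Rightarrow> ((nat \<Rightarrow> nat) \<times> (nat \<Rightarrow> nat) \<Rightarrow> complex) \<Rightarrow> bool" where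
  "repr n sc \<rho> w v c \<longleftrightarrow> finite {p. c p \<noteq> 0} \<and> {p. c p \<noteq> 0} \<subseteq> idx n \<times> idx n \<and>
     v = (\<Sum>p\<in>{p. c p \<noteq> 0}. sc (c p) (mono \<rho> n (fst p) (snd p) w))"

definition coeffs :: "nat \<Rightarrow> (complex \<Rightarrow> 'v::ab_group_add \<Rightarrow> 'v) \<Rightarrow> (gb \<Rightarrow> 'v \<Rightarrow> 'v) \<Rightarrow> 'v \<Rightarrow> 'v
    \<Rightarrow> (nat \<Rightarrow> nat) \<times> (nat \<Rightarrow> nat) \<Rightarrow> complex" where
  "coeffs n sc \<rho> w v = (THE c. repr n sc \<rho> w v c)"

definition weight :: "nat \<Rightarrow> (nat \<Rightarrow> nat) \<Rightarrow> nat" where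
  "weight n i = (\<Sum>k<n. (n - k) * i k)"

definition lex_gt :: "nat \<Rightarrow> (nat \<Rightarrow> nat) \<Rightarrow> (nat \<Rightarrow> nat) \<Rightarrow> bool" where
  "lex_gt n i j \<longleftrightarrow> (\<exists>k<n. i k > j k \<and> (\<forall>s<k. i s = j s))"

definition pair_gt :: "nat \<Rightarrow> (nat \<Rightarrow> nat) \<times> (nat \<Rightarrow> nat) \<Rightarrow> (nat \<Rightarrow> nat) \<times> (nat \<Rightarrow> nat) \<Rightarrow> bool" where
  "pair_gt n p q \<longleftrightarrow>
     weight n (fst p) + weight n (snd p) > weight n (fst q) + weight n (snd q)
   \<or> (weight n (fst p) + weight n (snd p) = weight n (fst q) + weight n (snd q) \<and> lex_gt n (snd p) (snd q))
   \<or> (weight n (fst p) + weight n (snd p) = weight n (fst q) + weight n (snd q) \<and> snd p = snd q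
        \<and> lex_gt n (fst p) (fst q))"

definition has_deg :: "nat \<Rightarrow> (complex \<Rightarrow> 'v::ab_group_add \<Rightarrow> 'v) \<Rightarrow> (gb \<Rightarrow> 'v \<Rightarrow> 'v) \<Rightarrow> 'v \<Rightarrow> 'v
    \<Rightarrow> (nat \<Rightarrow> nat) \<times> (nat \<Rightarrow> nat) \<Rightarrow> bool" where
  "has_deg n sc \<rho> w v p \<longleftrightarrow> coeffs n sc \<rho> w v p \<noteq> 0 \<and>
     (\<forall>q. coeffs n sc \<rho> w v q \<noteq> 0 \<longrightarrow> q \<noteq> p \<longrightarrow> pair_gt n p q)"

end

theory Submission
  imports Defs
begin


lemma eps_apply: "eps r k = (if k = r then 1 else 0)" by (simp add: eps_def)

lemma weight_split:
  assumes "k < n" "x k > 0"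
  shows "weight n x = weight n (x - eps k) + (n - k)"
proof -
  have pt: "x k' = (x - eps k) k' + eps k k'" for k'
    using assms by (auto simp: eps_def)
  have "weight n x = (\<Sum>k'<n. (n - k') * (x - eps k) k' + (n - k') * eps k k')"
    unfolding weight_def
    by (rule sum.cong) (simp, metis pt add_mult_distrib2)
  also have "\<dots> = weight n (x - eps k) + (\<Sum>k'<n. (n - k') * eps k k')"
    by (simp add: weight_def sum.distrib)
  also have "(\<Sum>k'<n. (n - k') * eps k k') = (\<Sum>k'\<in>{k}. (n - k') * eps k k')"
    by (rule sum.mono_neutral_right) (use assms in \<open>auto simp: eps_def\<close>)
  also have "(\<Sum>k'\<in>{k}. (n - k') * eps k k') = n - k" by (simp add: eps_def)
  finally show ?thesis .
qed

lemma weight_zero: "weight n (\<lambda>_. 0) = 0" by (simp add: weight_def)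

lemma weight_zero_imp: assumes "x \<in> idx n" "weight n x = 0" shows "x = (\<lambda>_. 0)"
proof
  fix k show "x k = 0"
  proof (cases "k < n")
    case True
    have "(n - k) * x k = 0" using assms(2) True unfolding weight_def
      by (subst (asm) sum_eq_0_iff) auto
    then show ?thesis using True by simp
  next
    case False then show ?thesis using assms(1) by (auto simp: idx_def)
  qed
qed

lemma idx_diff: "x \<in> idx n \<Longrightarrow> x - y \<in> idx n" by (auto simp: idx_def)

lemma lex_gt_irrefl: "\<not> lex_gt n x x" by (auto simp: lex_gt_def)
lemma lex_gt_zero: "\<not> lex_gt n (\<lambda>_. 0) x" by (auto simp: lex_gt_def)

lemma pair_gt_irrefl: "\<not> pair_gt n q q" by (auto simp: pair_gt_def lex_gt_irrefl)

lemma lex_gt_sub1: "k < n \<Longrightarrow> x k > 0 \<Longrightarrow> lex_gt n x (x - eps k)"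
  unfolding lex_gt_def by (rule exI[of _ k]) (auto simp: eps_def)

lemma lex_gt_trans: assumes "lex_gt n x y" "lex_gt n y z" shows "lex_gt n x z"
proof -
  obtain a where a: "a < n" "x a > y a" "\<forall>s<a. x s = y s" using assms(1) by (auto simp: lex_gt_def)
  obtain b where b: "b < n" "y b > z b" "\<forall>s<b. y s = z s" using assms(2) by (auto simp: lex_gt_def)
  show ?thesis unfolding lex_gt_def
  proof (cases "a < b")
    case True then show "\<exists>k<n. z k < x k \<and> (\<forall>s<k. x s = z s)"
      using a b by (intro exI[of _ a]) auto
  next
    case False then show "\<exists>k<n. z k < x k \<and> (\<forall>s<k. x s = z s)"
      using a b by (intro exI[of _ b]) (auto, metis le_less less_trans not_less)
  qed
qed

lemma lex_gt_sub: assumes "lex_gt n x y" "x k > 0" "y k > 0" shows "lex_gt n (x - eps k) (y - eps k)"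
proof -
  obtain k0 where k0: "k0 < n" "x k0 > y k0" "\<forall>t<k0. x t = y t" using assms(1) by (auto simp: lex_gt_def)
  show ?thesis unfolding lex_gt_def
    by (rule exI[of _ k0]) (use k0 assms(2,3) in \<open>auto simp: eps_def\<close>)
qed

lemma lex_gt_special:
  assumes i: "i \<in> idx n" and y: "y \<in> idx n" and s: "s < n" "i s > 0" "\<forall>k>s. i k = 0"
    and g: "lex_gt n i y" and ne: "y \<noteq> i - eps s" and ng: "\<not> lex_gt n (i - eps s) y"
  shows "weight n (i - eps s) < weight n y"
proof -
  obtain k0 where k0: "k0 < n" "i k0 > y k0" "\<forall>t<k0. i t = y t" using g by (auto simp: lex_gt_def)
  have "k0 = s"
  proof (rule ccontr)
    assume "k0 \<noteq> s"
    then consider "k0 < s" | "k0 > s" by linarith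
    then show False
    proof cases
      case 1 then have "lex_gt n (i - eps s) y" unfolding lex_gt_def using k0
        by (intro exI[of _ k0]) (auto simp: eps_def)
      with ng show False by simp
    next
      case 2 then show False using k0 s by auto
    qed
  qed
  have ys: "y s = i s - 1"
  proof (rule ccontr)
    assume "y s \<noteq> i s - 1"
    then have "lex_gt n (i - eps s) y" unfolding lex_gt_def using k0 \<open>k0 = s\<close> s
      by (intro exI[of _ s]) (auto simp: eps_def)
    with ng show False by simp
  qed
  have le: "\<forall>t. (i - eps s) t \<le> y t"
  proof
    fix t show "(i - eps s) t \<le> y t"
      by (cases t s rule: linorder_cases) (use k0 \<open>k0 = s\<close> ys s in \<open>auto simp: eps_def\<close>)
  qed
  have "\<exists>t. (i - eps s) t \<noteq> y t" using ne by (metis ext)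
  then obtain t where t: "(i - eps s) t \<noteq> y t" by blast
  have "t < n"
  proof (rule ccontr)
    assume "\<not> t < n"
    then have "i t = 0" "y t = 0" using i y by (auto simp: idx_def)
    then show False using t by simp
  qed
  have "(i - eps s) t < y t" using le t by (simp add: order_less_le)
  show ?thesis unfolding weight_def
    apply (rule sum_strict_mono_ex1)
      apply simp
    using le apply (simp add: mult_le_mono2)
    using \<open>t < n\<close> \<open>(i - eps s) t < y t\<close> by (intro bexI[of _ t]) auto
qed


definition ff :: "((nat \<Rightarrow> nat) \<times> (nat \<Rightarrow> nat)) \<times> nat \<times> bool \<Rightarrow> (nat \<Rightarrow> nat) \<times> (nat \<Rightarrow> nat)" where
  "ff t = (case t of (p, k, b) \<Rightarrow> if b then (fst p, snd p - eps k) else (fst p - eps k, snd p))"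

lemma key1:
  assumes j: "j \<in> idx n" and i: "i \<in> idx n" and r: "r < n" "j r > 0"
    and p: "a \<in> idx n" "c \<in> idx n" and pg: "(a, c) = (j, i) \<or> pair_gt n (j, i) (a, c)"
    and k: "k \<le> r" and pos: "if b then c k > 0 else a k > 0"
  shows "((a, c), k, b) = ((j, i), r, False) \<or> pair_gt n (j - eps r, i) (ff ((a, c), k, b))"
proof -
  have kn: "k < n" using k r by simp
  have Wt: "weight n (j - eps r) + weight n i + (n - r) = weight n j + weight n i"
    using weight_split[of r n j] r by simp
  obtain a' c' where f: "ff ((a, c), k, b) = (a', c')" by (cases "ff ((a, c), k, b)") auto
  have Wf: "weight n a' + weight n c' + (n - k) = weight n a + weight n c"
    using f pos weight_split[OF kn, of a] weight_split[OF kn, of c]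
    by (cases b) (auto simp: ff_def)
  have Wp: "weight n a + weight n c \<le> weight n j + weight n i"
    using pg by (auto simp: pair_gt_def)
  show ?thesis
  proof (cases "weight n a' + weight n c' < weight n (j - eps r) + weight n i")
    case True then show ?thesis by (simp add: f pair_gt_def)
  next
    case False
    then have kr: "k = r" and Weq: "weight n a + weight n c = weight n j + weight n i"
      and Weq2: "weight n a' + weight n c' = weight n (j - eps r) + weight n i"
      using Wt Wf Wp k r by linarith+
    have lt: "lex_gt n i (i - eps r)" if "i r > 0" using lex_gt_sub1[of r n i] r(1) that by simp
    consider "a = j" "c = i" | "lex_gt n i c" | "c = i" "lex_gt n j a"
      using pg Weq by (auto simp: pair_gt_def)
    then show ?thesis
    proof cases
      case 1
      show ?thesis
      proof (cases b)
        case True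
        then have "c' = i - eps r" "i r > 0" using f pos kr 1 by (auto simp: ff_def)
        then show ?thesis using Weq2 lt by (simp add: f pair_gt_def)
      qed (use 1 kr in auto)
    next
      case 2
      show ?thesis
      proof (cases b)
        case True
        then have "c' = c - eps r" "c r > 0" using f pos kr by (auto simp: ff_def)
        then show ?thesis using Weq2 lex_gt_trans[OF 2 lex_gt_sub1[of r n c]] r(1) by (simp add: f pair_gt_def)
      next
        case False
        then have "c' = c" using f by (auto simp: ff_def)
        then show ?thesis using Weq2 2 by (simp add: f pair_gt_def)
      qed
    next
      case 3
      show ?thesis
      proof (cases b)
        case True
        then have "c' = i - eps r" "i r > 0" using f pos kr 3 by (auto simp: ff_def)
        then show ?thesis using Weq2 lt by (simp add: f pair_gt_def)
      next
        case False
        then have "c' = i" "a' = a - eps r" "a r > 0" using f pos kr 3 by (auto simp: ff_def)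
        then show ?thesis using Weq2 lex_gt_sub[of n j a r] 3(2) r(2) by (simp add: f pair_gt_def)
      qed
    qed
  qed
qed

lemma key2:
  assumes i: "i \<in> idx n" and s: "s < n" "i s > 0" "\<forall>k>s. i k = 0"
    and p: "a \<in> idx n" "c \<in> idx n" and pg: "(a, c) = ((\<lambda>_. 0), i) \<or> pair_gt n ((\<lambda>_. 0), i) (a, c)"
    and k: "k \<le> s" and pos: "if b then c k > 0 else a k > 0"
  shows "((a, c), k, b) = (((\<lambda>_. 0), i), s, True) \<or> ((a, c), k, b) = ((eps s, i - eps s), s, False)
     \<or> pair_gt n ((\<lambda>_. 0), i - eps s) (ff ((a, c), k, b))"
proof -
  have kn: "k < n" using k s by simp
  have Wt: "weight n (i - eps s) + (n - s) = weight n i"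
    using weight_split[of s n i] s(1,2) by simp
  obtain a' c' where f: "ff ((a, c), k, b) = (a', c')" by (cases "ff ((a, c), k, b)") auto
  have Wf: "weight n a' + weight n c' + (n - k) = weight n a + weight n c"
    using f pos weight_split[OF kn, of a] weight_split[OF kn, of c]
    by (cases b) (auto simp: ff_def)
  have Wp: "weight n a + weight n c \<le> weight n i"
    using pg by (auto simp: pair_gt_def weight_zero)
  show ?thesis
  proof (cases "weight n a' + weight n c' < weight n (i - eps s)")
    case True then show ?thesis by (simp add: f pair_gt_def weight_zero)
  next
    case False
    then have kr: "k = s" and Weq: "weight n a + weight n c = weight n i"
      and Weq2: "weight n a' + weight n c' = weight n (i - eps s)"
      using Wt Wf Wp k s by linarith+
    consider "a = (\<lambda>_. 0)" "c = i" | "lex_gt n i c"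
      using pg Weq by (auto simp: pair_gt_def weight_zero lex_gt_zero)
    then show ?thesis
    proof cases
      case 1
      show ?thesis
      proof (cases b)
        case False then show ?thesis using pos 1 by simp
      qed (use 1 kr in auto)
    next
      case 2
      show ?thesis
      proof (cases b)
        case True
        then have "c' = c - eps s" "c s > 0" using f pos kr by (auto simp: ff_def)
        then show ?thesis using Weq2 lex_gt_sub[of n i c s] 2 s(2) by (simp add: f pair_gt_def weight_zero)
      next
        case False
        then have c': "c' = c" "a' = a - eps s" "a s > 0" using f pos kr by (auto simp: ff_def)
        have Wa: "weight n a = weight n a' + (n - s)" using weight_split[of s n a] s(1) c'(3) c' by simp
        show ?thesis
        proof (cases "lex_gt n (i - eps s) c")
          case True then show ?thesis using Weq2 c' by (simp add: f pair_gt_def weight_zero)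
        next
          case nl: False
          show ?thesis
          proof (cases "c = i - eps s")
            case True
            then have "weight n a' = 0" using Weq2 c' by simp
            then have a0: "a' = (\<lambda>_. 0)" using weight_zero_imp idx_diff p(1) c'(2) by blast
            have "a = eps s"
            proof
              fix t show "a t = eps s t"
                using fun_cong[OF a0, of t] c' by (cases "t = s") (auto simp: eps_def)
            qed
            then show ?thesis using True kr False by simp
          next
            case False
            have "weight n (i - eps s) < weight n c"
              using lex_gt_special[OF i p(2) s 2 False nl] .
            then show ?thesis using Weq Wt Wa by linarith
          qed
        qed
      qed
    qed
  qed
qed



lemma has_deg_from:
  assumes co: "coeffs n sc \<rho> w u = (\<lambda>q. \<Sum>t\<in>{t\<in>T. f t = q}. a t)"
    and fT: "finite T" and fB: "finite B"
    and cl: "\<forall>t\<in>T. a t \<noteq> 0 \<longrightarrow> t \<in> B \<or> pair_gt n q0 (f t)"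
    and Bq: "\<forall>t\<in>B. f t = q0" and BT: "\<forall>t\<in>B. t \<notin> T \<longrightarrow> a t = 0"
    and nz: "sum a B \<noteq> 0"
  shows "has_deg n sc \<rho> w u q0"
proof -
  have "(\<Sum>t\<in>{t\<in>T. f t = q0}. a t) = (\<Sum>t\<in>{t\<in>T. f t = q0} \<inter> B. a t)"
  proof (rule sum.mono_neutral_right)
    have cl': "\<forall>t\<in>T. f t = q0 \<longrightarrow> a t \<noteq> 0 \<longrightarrow> t \<in> B"
    proof (intro ballI impI)
      fix t assume "t \<in> T" "f t = q0" "a t \<noteq> 0"
      then have "t \<in> B \<or> pair_gt n q0 q0" using cl by auto
      then show "t \<in> B" using pair_gt_irrefl by blast
    qed
    show "\<forall>t\<in>{t \<in> T. f t = q0} - {t \<in> T. f t = q0} \<inter> B. a t = 0" using cl' by blast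
  qed (use fT in auto)
  also have "\<dots> = sum a B"
    by (rule sum.mono_neutral_left) (use fB Bq BT in auto)
  finally have c0: "coeffs n sc \<rho> w u q0 \<noteq> 0" using co nz by simp
  have "pair_gt n q0 q" if "coeffs n sc \<rho> w u q \<noteq> 0" "q \<noteq> q0" for q
  proof -
    have "(\<Sum>t\<in>{t\<in>T. f t = q}. a t) \<noteq> 0" using that co by simp
    then obtain t where "t \<in> {t\<in>T. f t = q}" "a t \<noteq> 0" by (rule sum.not_neutral_contains_not_neutral)
    then have "t \<in> T" "f t = q" "a t \<noteq> 0" by auto
    then show ?thesis using cl Bq that(2) by blast
  qed
  then show ?thesis using c0 by (simp add: has_deg_def)
qed

definition isX :: "(int \<Rightarrow> gb) \<Rightarrow> bool" where "isX X \<longleftrightarrow> X = I \<or> X = J"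

definition aa :: "((nat \<Rightarrow> nat) \<times> (nat \<Rightarrow> nat) \<Rightarrow> complex) \<Rightarrow> (nat \<Rightarrow> complex) \<Rightarrow> (nat \<Rightarrow> complex)
   \<Rightarrow> ((nat \<Rightarrow> nat) \<times> (nat \<Rightarrow> nat)) \<times> nat \<times> bool \<Rightarrow> complex" where
  "aa c bI bJ t = (case t of (p, k, b) \<Rightarrow>
     if b then c p * (of_nat (snd p k) * bI k) else c p * (of_nat (fst p k) * bJ k))"

locale wsetup =
  fixes m n :: nat and \<psi> :: "gb \<Rightarrow> complex" and sc :: "complex \<Rightarrow> 'v::ab_group_add \<Rightarrow> 'v"
    and \<rho> :: "gb \<Rightarrow> 'v \<Rightarrow> 'v" and w :: 'v
  assumes n0: "0 < n" and nm: "n \<le> m" and whit: "whittaker m n \<psi>" and lm: "lie_module m sc \<rho>"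
    and wact: "\<forall>a. in_G m n a \<longrightarrow> \<rho> a w = sc (\<psi> a) w" and uniq: "\<forall>u. \<exists>!c. repr n sc \<rho> w u c"
begin

sublocale vs: vector_space sc using lm by (simp add: lie_module_def)

definition lin :: "('v \<Rightarrow> 'v) \<Rightarrow> bool" where
  "lin T \<longleftrightarrow> (\<forall>x y. T (x + y) = T x + T y) \<and> (\<forall>c x. T (sc c x) = sc c (T x))"

lemma lin_add: "lin T \<Longrightarrow> T (x + y) = T x + T y" by (simp add: lin_def)
lemma lin_sc: "lin T \<Longrightarrow> T (sc c x) = sc c (T x)" by (simp add: lin_def)
lemma lin_zero: "lin T \<Longrightarrow> T 0 = 0"
  using lin_sc[of T 0 0] by simp
lemma lin_diff: "lin T \<Longrightarrow> T (x - y) = T x - T y"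
  using lin_add[of T "x - y" y] by (simp add: algebra_simps)
lemma lin_sum: "lin T \<Longrightarrow> T (sum g A) = (\<Sum>a\<in>A. T (g a))"
  by (induct A rule: infinite_finite_induct) (simp_all add: lin_zero lin_add)
lemma lin_comp: "lin T \<Longrightarrow> lin U \<Longrightarrow> lin (\<lambda>x. T (U x))"
  by (simp add: lin_def)
lemma lin_id: "lin (\<lambda>x. x)" by (simp add: lin_def)
lemma lin_pow: "lin T \<Longrightarrow> lin (T ^^ p)"
  by (induct p) (simp_all add: lin_def)

lemma lin_rho: assumes "in_G m 0 a" shows "lin (\<rho> a)"
proof -
  have "Vector_Spaces.linear sc sc (\<rho> a)" using lm assms by (simp add: lie_module_def)
  then show ?thesis unfolding lin_def Vector_Spaces.linear_iff by blast
qed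

lemma inG_X: "isX X \<Longrightarrow> in_G m 0 (X (int k))"
  by (auto simp: isX_def)

lemma lin_X: "isX X \<Longrightarrow> lin (\<rho> (X (int k)))"
  by (rule lin_rho[OF inG_X])

lemma bracket: "in_G m 0 a \<Longrightarrow> in_G m 0 b \<Longrightarrow>
   \<rho> a (\<rho> b v) - \<rho> b (\<rho> a v) = (\<Sum>(c, e)\<leftarrow>brk a b. sc c (\<rho> e v))"
  using lm unfolding lie_module_def by blast

lemma comm: assumes "isX X" "isX Y" "l \<ge> 0"
  shows "\<rho> (X (int k)) (\<rho> (Y l) u) = \<rho> (Y l) (\<rho> (X (int k)) u)"
proof -
  have "in_G m 0 (Y l)" using assms by (auto simp: isX_def)
  from bracket[of "X (int k)" "Y l" u, OF inG_X[OF assms(1)] this]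
  have "\<rho> (X (int k)) (\<rho> (Y l) u) - \<rho> (Y l) (\<rho> (X (int k)) u) = 0"
    using assms(1,2) by (auto simp: isX_def)
  then show ?thesis by simp
qed

definition SS :: "'v set" where
  "SS = {u. \<forall>k. k \<ge> int n \<longrightarrow> \<rho> (I k) u = sc (\<psi> (I k)) u \<and> \<rho> (J k) u = sc (\<psi> (J k)) u}"

lemma w_SS: "w \<in> SS"
  using wact by (auto simp: SS_def)

lemma SS_X: assumes "u \<in> SS" "isX X" shows "\<rho> (X (int k)) u \<in> SS"
proof -
  have "\<rho> (Z k') (\<rho> (X (int k)) u) = sc (\<psi> (Z k')) (\<rho> (X (int k)) u)"
    if "k' \<ge> int n" "Z = I \<or> Z = J" for k' Z
  proof -
    have "\<rho> (Z k') (\<rho> (X (int k)) u) = \<rho> (X (int k)) (\<rho> (Z k') u)"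
      using comm[OF assms(2), of Z k'] that by (auto simp: isX_def)
    also have "\<rho> (Z k') u = sc (\<psi> (Z k')) u" using assms(1) that by (auto simp: SS_def)
    finally show ?thesis using lin_sc[OF lin_X[OF assms(2)]] by simp
  qed
  then show ?thesis by (auto simp: SS_def)
qed

lemma SS_pow: "u \<in> SS \<Longrightarrow> isX X \<Longrightarrow> (\<rho> (X (int k)) ^^ p) u \<in> SS"
  by (induct p) (auto intro: SS_X)

lemma SS_powX: "u \<in> SS \<Longrightarrow> isX X \<Longrightarrow> powX X \<rho> i K u \<in> SS"
  by (induct K) (auto intro: SS_pow)

lemma lin_powX: "isX X \<Longrightarrow> lin (powX X \<rho> i K)"
proof (induct K)
  case 0 then show ?case by (simp add: lin_def)
next
  case (Suc K)
  have "lin (\<lambda>v. (\<rho> (X (int K)) ^^ i K) (powX X \<rho> i K v))"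
    by (rule lin_comp[OF lin_pow[OF lin_X[OF Suc(2)]] Suc(1)[OF Suc(2)]])
  then show ?case by (simp add: fun_eq_iff[symmetric])
qed

lemma powX_cong: "(\<forall>k<K. i k = i' k) \<Longrightarrow> powX X \<rho> i K u = powX X \<rho> i' K u"
  by (induct K) auto


definition DD :: "gb \<Rightarrow> 'v \<Rightarrow> 'v" where "DD x u = \<rho> x u - sc (\<psi> x) u"

lemma lin_DD: "in_G m 0 x \<Longrightarrow> lin (DD x)"
  using lin_rho[of x] unfolding lin_def DD_def
  by (simp add: algebra_simps vs.scale_right_distrib)

lemma Dstep:
  assumes X: "isX X" and xG: "in_G m 0 x"
    and hyp: "\<forall>u\<in>SS. \<forall>k. \<rho> x (\<rho> (X (int k)) u) - \<rho> (X (int k)) (\<rho> x u) = sc (\<beta> k) u"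
    and u: "u \<in> SS"
  shows "DD x (\<rho> (X (int k)) u) = \<rho> (X (int k)) (DD x u) + sc (\<beta> k) u"
proof -
  have 1: "\<rho> x (\<rho> (X (int k)) u) = \<rho> (X (int k)) (\<rho> x u) + sc (\<beta> k) u"
  proof -
    have "\<rho> x (\<rho> (X (int k)) u) - \<rho> (X (int k)) (\<rho> x u) = sc (\<beta> k) u" using hyp u by blast
    then show ?thesis by (simp add: diff_eq_eq add.commute)
  qed
  show ?thesis unfolding DD_def 1 lin_diff[OF lin_X[OF X]] lin_sc[OF lin_X[OF X]]
    by (simp add: algebra_simps)
qed

lemma Dpow:
  assumes X: "isX X" and xG: "in_G m 0 x"
    and hyp: "\<forall>u\<in>SS. \<forall>k. \<rho> x (\<rho> (X (int k)) u) - \<rho> (X (int k)) (\<rho> x u) = sc (\<beta> k) u"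
    and u: "u \<in> SS"
  shows "DD x ((\<rho> (X (int k)) ^^ p) u) = (\<rho> (X (int k)) ^^ p) (DD x u)
           + sc (of_nat p * \<beta> k) ((\<rho> (X (int k)) ^^ (p - 1)) u)"
proof (induct p)
  case 0 then show ?case by simp
next
  case (Suc p)
  let ?T = "\<rho> (X (int k))"
  have SSp: "(?T ^^ p) u \<in> SS" using SS_pow[OF u X] .
  have a: "sc (of_nat p * \<beta> k) (?T ((?T ^^ (p - 1)) u)) = sc (of_nat p * \<beta> k) ((?T ^^ p) u)"
    by (cases p) auto
  have "DD x ((?T ^^ Suc p) u) = ?T (DD x ((?T ^^ p) u)) + sc (\<beta> k) ((?T ^^ p) u)"
    using Dstep[OF X xG hyp SSp] by simp
  also have "\<dots> = (?T ^^ Suc p) (DD x u) + sc (of_nat p * \<beta> k) ((?T ^^ p) u) + sc (\<beta> k) ((?T ^^ p) u)"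
    unfolding Suc lin_add[OF lin_X[OF X]] lin_sc[OF lin_X[OF X]] a by simp
  also have "\<dots> = (?T ^^ Suc p) (DD x u) + sc (of_nat (Suc p) * \<beta> k) ((?T ^^ (Suc p - 1)) u)"
    by (simp add: algebra_simps vs.scale_left_distrib)
  finally show ?case .
qed

lemma DpowX:
  assumes X: "isX X" and xG: "in_G m 0 x"
    and hyp: "\<forall>u\<in>SS. \<forall>k. \<rho> x (\<rho> (X (int k)) u) - \<rho> (X (int k)) (\<rho> x u) = sc (\<beta> k) u"
    and u: "u \<in> SS"
  shows "DD x (powX X \<rho> i K u) = powX X \<rho> i K (DD x u)
           + (\<Sum>k<K. sc (of_nat (i k) * \<beta> k) (powX X \<rho> (i - eps k) K u))"
proof (induct K)
  case 0 then show ?case by simp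
next
  case (Suc K)
  let ?T = "\<rho> (X (int K))"
  let ?y = "powX X \<rho> i K u"
  have SSy: "?y \<in> SS" using SS_powX[OF u X] .
  have e1: "(?T ^^ i K) (powX X \<rho> (i - eps k) K u) = powX X \<rho> (i - eps k) (Suc K) u" if "k < K" for k
    using that by (simp add: eps_def)
  have e2: "(?T ^^ (i K - 1)) ?y = powX X \<rho> (i - eps K) (Suc K) u"
    using powX_cong[where K=K and i="i - eps K" and i'=i and X=X and u=u] by (simp add: eps_def)
  have s1: "DD x (powX X \<rho> i (Suc K) u) = (?T ^^ i K) (DD x ?y) + sc (of_nat (i K) * \<beta> K) ((?T ^^ (i K - 1)) ?y)"
    using Dpow[OF X xG hyp SSy] by simp
  have s2: "(?T ^^ i K) (DD x ?y) = powX X \<rho> i (Suc K) (DD x u)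
      + (\<Sum>k<K. sc (of_nat (i k) * \<beta> k) (powX X \<rho> (i - eps k) (Suc K) u))"
    unfolding Suc lin_add[OF lin_pow[OF lin_X[OF X]]] lin_sum[OF lin_pow[OF lin_X[OF X]]]
      lin_sc[OF lin_pow[OF lin_X[OF X]]]
    using e1 by simp
  have "DD x (powX X \<rho> i (Suc K) u) = (powX X \<rho> i (Suc K) (DD x u)
      + (\<Sum>k<K. sc (of_nat (i k) * \<beta> k) (powX X \<rho> (i - eps k) (Suc K) u)))
      + sc (of_nat (i K) * \<beta> K) (powX X \<rho> (i - eps K) (Suc K) u)"
    using s1 unfolding s2 e2 .
  then show ?case by (simp only: sum.lessThan_Suc add.assoc)
qed

lemma Dmono:
  assumes xG: "in_G m 0 x"
    and hI: "\<forall>u\<in>SS. \<forall>k. \<rho> x (\<rho> (I (int k)) u) - \<rho> (I (int k)) (\<rho> x u) = sc (bI k) u"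
    and hJ: "\<forall>u\<in>SS. \<forall>k. \<rho> x (\<rho> (J (int k)) u) - \<rho> (J (int k)) (\<rho> x u) = sc (bJ k) u"
    and Dw: "DD x w = 0"
  shows "DD x (mono \<rho> n j i w) = (\<Sum>k<n. sc (of_nat (i k) * bI k) (mono \<rho> n j (i - eps k) w))
      + (\<Sum>k<n. sc (of_nat (j k) * bJ k) (mono \<rho> n (j - eps k) i w))"
proof -
  have XI: "isX I" and XJ: "isX J" by (auto simp: isX_def)
  have y: "powX I \<rho> i n w \<in> SS" using SS_powX[OF w_SS XI] .
  have "DD x (powX I \<rho> i n w) = (\<Sum>k<n. sc (of_nat (i k) * bI k) (powX I \<rho> (i - eps k) n w))"
    using DpowX[OF XI xG hI w_SS, of i n] Dw lin_zero[OF lin_powX[OF XI]] by simp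
  then show ?thesis
    unfolding mono_def DpowX[OF XJ xG hJ y, of j n]
    by (simp add: lin_sum[OF lin_powX[OF XJ]] lin_sc[OF lin_powX[OF XJ]])
qed


lemma collect:
  assumes fT: "finite T" and fi: "f ` T \<subseteq> idx n \<times> idx n"
    and u: "u = (\<Sum>t\<in>T. sc (a t) (mono \<rho> n (fst (f t)) (snd (f t)) w))"
  shows "coeffs n sc \<rho> w u = (\<lambda>q. \<Sum>t\<in>{t\<in>T. f t = q}. a t)"
proof -
  define c' where "c' = (\<lambda>q. \<Sum>t\<in>{t\<in>T. f t = q}. a t)"
  have sub: "{q. c' q \<noteq> 0} \<subseteq> f ` T"
  proof
    fix q assume "q \<in> {q. c' q \<noteq> 0}"
    then have "(\<Sum>t\<in>{t\<in>T. f t = q}. a t) \<noteq> 0" by (simp add: c'_def)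
    then obtain t where "t \<in> {t\<in>T. f t = q}" by (rule sum.not_neutral_contains_not_neutral)
    then have "t \<in> T" "f t = q" by auto
    then show "q \<in> f ` T" by blast
  qed
  have fin: "finite {q. c' q \<noteq> 0}" using sub fT finite_subset by blast
  have "(\<Sum>q\<in>{q. c' q \<noteq> 0}. sc (c' q) (mono \<rho> n (fst q) (snd q) w))
      = (\<Sum>q\<in>f ` T. sc (c' q) (mono \<rho> n (fst q) (snd q) w))"
    by (rule sum.mono_neutral_left) (use fT sub in auto)
  also have "\<dots> = (\<Sum>q\<in>f ` T. \<Sum>t\<in>{t\<in>T. f t = q}. sc (a t) (mono \<rho> n (fst (f t)) (snd (f t)) w))"
    unfolding c'_def vs.scale_sum_left by (rule sum.cong) auto
  also have "\<dots> = u" unfolding u by (rule sum.group) (use fT in auto)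
  finally have rep: "repr n sc \<rho> w u c'" unfolding repr_def using fin sub fi by auto
  have ex: "\<exists>!c. repr n sc \<rho> w u c" using uniq by blast
  show ?thesis unfolding coeffs_def c'_def[symmetric] by (rule the1_equality[of "repr n sc \<rho> w u" c', OF ex rep])
qed

lemma coeffs_repr: "repr n sc \<rho> w u (coeffs n sc \<rho> w u)"
proof -
  have ex: "\<exists>!c. repr n sc \<rho> w u c" using uniq by blast
  show ?thesis unfolding coeffs_def by (rule theI'[OF ex])
qed

lemma Dv:
  assumes xG: "in_G m 0 x"
    and hI: "\<forall>u\<in>SS. \<forall>k. \<rho> x (\<rho> (I (int k)) u) - \<rho> (I (int k)) (\<rho> x u) = sc (bI k) u"
    and hJ: "\<forall>u\<in>SS. \<forall>k. \<rho> x (\<rho> (J (int k)) u) - \<rho> (J (int k)) (\<rho> x u) = sc (bJ k) u"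
    and Dw: "DD x w = 0" and r: "repr n sc \<rho> w v c"
  shows "coeffs n sc \<rho> w (DD x v) = (\<lambda>q. \<Sum>t\<in>{t\<in>{p. c p \<noteq> 0} \<times> ({..<n} \<times> UNIV). ff t = q}. aa c bI bJ t)"
proof (rule collect)
  let ?P = "{p. c p \<noteq> 0}"
  have fP: "finite ?P" and Pi: "?P \<subseteq> idx n \<times> idx n"
    and v: "v = (\<Sum>p\<in>?P. sc (c p) (mono \<rho> n (fst p) (snd p) w))"
    using r by (auto simp: repr_def)
  have fKB: "finite ({..<n} \<times> (UNIV :: bool set))" by simp
  show "finite (?P \<times> ({..<n} \<times> (UNIV :: bool set)))" using fP by simp
  show "ff ` (?P \<times> ({..<n} \<times> (UNIV :: bool set))) \<subseteq> idx n \<times> idx n"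
  proof
    fix q assume "q \<in> ff ` (?P \<times> ({..<n} \<times> (UNIV :: bool set)))"
    then obtain p k b where pk: "c p \<noteq> 0" "q = ff (p, k, b)" by auto
    then have "fst p \<in> idx n" "snd p \<in> idx n" using Pi by auto
    then show "q \<in> idx n \<times> idx n" using pk(2) by (auto simp: ff_def idx_diff)
  qed
  let ?m = "\<lambda>t. mono \<rho> n (fst (ff t)) (snd (ff t)) w"
  have "(\<Sum>t\<in>?P \<times> ({..<n} \<times> (UNIV :: bool set)). sc (aa c bI bJ t) (?m t))
      = (\<Sum>p\<in>?P. \<Sum>k<n. sc (aa c bI bJ (p, k, True)) (?m (p, k, True))
            + sc (aa c bI bJ (p, k, False)) (?m (p, k, False)))"
    by (simp add: sum.cartesian_product' UNIV_bool add.commute)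
  also have "\<dots> = (\<Sum>p\<in>?P. sc (c p) (DD x (mono \<rho> n (fst p) (snd p) w)))"
    unfolding Dmono[OF xG hI hJ Dw]
    by (rule sum.cong) (simp_all add: aa_def ff_def sum.distrib vs.scale_sum_right vs.scale_right_distrib)
  also have "\<dots> = DD x v"
    unfolding v lin_sum[OF lin_DD[OF xG]] lin_sc[OF lin_DD[OF xG]] ..
  finally show "DD x v = (\<Sum>t\<in>?P \<times> ({..<n} \<times> (UNIV :: bool set)). sc (aa c bI bJ t) (?m t))" by (rule sym)
qed


lemma whitD: "in_G m n a \<Longrightarrow> in_G m n b \<Longrightarrow> (\<Sum>(c, e)\<leftarrow>brk a b. c * \<psi> e) = 0"
  using whit unfolding whittaker_def by blast

lemma psiI0: "k \<ge> int (m + n) \<Longrightarrow> \<psi> (I k) = 0"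
  using whitD[of "H (int m)" "I (k - int m)"] by simp

lemma psiJ0: "k \<ge> int (m + n) \<Longrightarrow> \<psi> (J k) = 0"
  using whitD[of "H (int m)" "J (k - int m)"] by simp

lemma hI_H: "a \<ge> int m \<Longrightarrow> \<forall>u\<in>SS. \<forall>k. \<rho> (H a) (\<rho> (I (int k)) u) - \<rho> (I (int k)) (\<rho> (H a) u)
    = sc (\<psi> (I (a + int k))) u"
proof (intro ballI allI)
  fix u k assume a: "a \<ge> int m" and u: "u \<in> SS"
  have "\<rho> (H a) (\<rho> (I (int k)) u) - \<rho> (I (int k)) (\<rho> (H a) u) = \<rho> (I (a + int k)) u"
    using bracket[of "H a" "I (int k)" u] a by simp
  also have "\<dots> = sc (\<psi> (I (a + int k))) u" using u a nm by (auto simp: SS_def)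
  finally show "\<rho> (H a) (\<rho> (I (int k)) u) - \<rho> (I (int k)) (\<rho> (H a) u) = sc (\<psi> (I (a + int k))) u" .
qed

lemma hJ_H: "a \<ge> int m \<Longrightarrow> \<forall>u\<in>SS. \<forall>k. \<rho> (H a) (\<rho> (J (int k)) u) - \<rho> (J (int k)) (\<rho> (H a) u)
    = sc (- \<psi> (J (a + int k))) u"
proof (intro ballI allI)
  fix u k assume a: "a \<ge> int m" and u: "u \<in> SS"
  have "\<rho> (H a) (\<rho> (J (int k)) u) - \<rho> (J (int k)) (\<rho> (H a) u) = sc (-1) (\<rho> (J (a + int k)) u)"
    using bracket[of "H a" "J (int k)" u] a by simp
  also have "\<dots> = sc (- \<psi> (J (a + int k))) u" using u a nm by (auto simp: SS_def)
  finally show "\<rho> (H a) (\<rho> (J (int k)) u) - \<rho> (J (int k)) (\<rho> (H a) u) = sc (- \<psi> (J (a + int k))) u" .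
qed

lemma hI_L: "a \<ge> int m \<Longrightarrow> \<forall>u\<in>SS. \<forall>k. \<rho> (L a) (\<rho> (I (int k)) u) - \<rho> (I (int k)) (\<rho> (L a) u)
    = sc (of_int (int k - a) * \<psi> (I (a + int k))) u"
proof (intro ballI allI)
  fix u k assume a: "a \<ge> int m" and u: "u \<in> SS"
  have "\<rho> (L a) (\<rho> (I (int k)) u) - \<rho> (I (int k)) (\<rho> (L a) u) = sc (of_int (int k - a)) (\<rho> (I (a + int k)) u)"
    using bracket[of "L a" "I (int k)" u] a by simp
  also have "\<dots> = sc (of_int (int k - a) * \<psi> (I (a + int k))) u" using u a nm by (auto simp: SS_def)
  finally show "\<rho> (L a) (\<rho> (I (int k)) u) - \<rho> (I (int k)) (\<rho> (L a) u) = sc (of_int (int k - a) * \<psi> (I (a + int k))) u" .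
qed

lemma hJ_L: "a \<ge> int m \<Longrightarrow> \<forall>u\<in>SS. \<forall>k. \<rho> (L a) (\<rho> (J (int k)) u) - \<rho> (J (int k)) (\<rho> (L a) u)
    = sc (of_int (int k - a) * \<psi> (J (a + int k))) u"
proof (intro ballI allI)
  fix u k assume a: "a \<ge> int m" and u: "u \<in> SS"
  have "\<rho> (L a) (\<rho> (J (int k)) u) - \<rho> (J (int k)) (\<rho> (L a) u) = sc (of_int (int k - a)) (\<rho> (J (a + int k)) u)"
    using bracket[of "L a" "J (int k)" u] a by simp
  also have "\<dots> = sc (of_int (int k - a) * \<psi> (J (a + int k))) u" using u a nm by (auto simp: SS_def)
  finally show "\<rho> (L a) (\<rho> (J (int k)) u) - \<rho> (J (int k)) (\<rho> (L a) u) = sc (of_int (int k - a) * \<psi> (J (a + int k))) u" .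
qed

lemma Dw_H: "a \<ge> int m \<Longrightarrow> DD (H a) w = 0"
  using wact by (simp add: DD_def)
lemma Dw_L: "a \<ge> int m \<Longrightarrow> DD (L a) w = 0"
  using wact by (simp add: DD_def)

end



theorem lemma3p2:
  fixes m n :: nat and \<psi> :: "gb \<Rightarrow> complex"
    and sc :: "complex \<Rightarrow> 'v::ab_group_add \<Rightarrow> 'v" and \<rho> :: "gb \<Rightarrow> 'v \<Rightarrow> 'v"
    and w v :: 'v and j i :: "nat \<Rightarrow> nat"
  assumes "0 < n" and "n \<le> m"
    and "whittaker m n \<psi>"
    and "\<psi> (I (int (m + n - 1))) * \<psi> (J (int (m + n - 1))) \<noteq> 0"
    and "lie_module m sc \<rho>"
    and "\<forall>a. in_G m n a \<longrightarrow> \<rho> a w = sc (\<psi> a) w"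
    and "\<forall>u. \<exists>!c. repr n sc \<rho> w u c"
    and "\<forall>a. v \<noteq> sc a w"
    and "has_deg n sc \<rho> w v (j, i)"
  shows "(j \<noteq> (\<lambda>_. 0) \<longrightarrow>
           (let r = (LEAST k. j k \<noteq> 0) in
              has_deg n sc \<rho> w
                (\<rho> (H (int (m + n - 1 - r))) v - sc (\<psi> (H (int (m + n - 1 - r)))) v)
                (j - eps r, i)))
       \<and> (j = (\<lambda>_. 0) \<and> i \<noteq> (\<lambda>_. 0) \<longrightarrow>
           (let s = (GREATEST k. i k \<noteq> 0) in
              has_deg n sc \<rho> w
                (\<rho> (H (int (m + n - 1 - s))) v - sc (\<psi> (H (int (m + n - 1 - s)))) v)
                ((\<lambda>_. 0), i - eps s)
            \<or> has_deg n sc \<rho> w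
                (\<rho> (L (int (m + n - 1 - s))) v - sc (\<psi> (L (int (m + n - 1 - s)))) v)
                ((\<lambda>_. 0), i - eps s)))"
proof -
  interpret W: wsetup m n \<psi> sc \<rho> w
    by unfold_locales (use assms in auto)
  define c where "c = coeffs n sc \<rho> w v"
  have rc: "repr n sc \<rho> w v c" unfolding c_def by (rule W.coeffs_repr)
  have supp: "{p. c p \<noteq> 0} \<subseteq> idx n \<times> idx n" using rc by (simp add: repr_def)
  have cji: "c (j, i) \<noteq> 0" and top: "\<And>q. c q \<noteq> 0 \<Longrightarrow> q \<noteq> (j, i) \<Longrightarrow> pair_gt n (j, i) q"
    using assms(9) by (auto simp: has_deg_def c_def)
  have ji: "j \<in> idx n" "i \<in> idx n" using supp cji by auto
  have psiIt: "\<psi> (I (int (m + n - 1))) \<noteq> 0" and psiJt: "\<psi> (J (int (m + n - 1))) \<noteq> 0"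
    using assms(4) by auto
  let ?T = "{p. c p \<noteq> 0} \<times> ({..<n} \<times> (UNIV :: bool set))"
  have fT: "finite ?T" using rc by (simp add: repr_def)
  have inT: "\<And>p k b. (p, k, b) \<in> ?T \<longleftrightarrow> c p \<noteq> 0 \<and> k < n" by auto
  show ?thesis
  proof (intro conjI impI)
    assume jn: "j \<noteq> (\<lambda>_. 0)"
    define r where "r = (LEAST k. j k \<noteq> 0)"
    have "\<exists>k. j k \<noteq> 0" using jn by auto
    then have jr: "j r \<noteq> 0" unfolding r_def by (rule LeastI_ex)
    have rn: "r < n"
    proof (rule ccontr)
      assume "\<not> r < n" then have "j r = 0" using ji(1) by (simp add: idx_def)
      with jr show False by simp
    qed
    define a where "a = int (m + n - 1 - r)"
    have am: "a \<ge> int m" using rn by (simp add: a_def)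
    have xG: "in_G m 0 (H a)" using am by simp
    note co = W.Dv[OF xG W.hI_H[OF am] W.hJ_H[OF am] W.Dw_H[OF am] rc]
    let ?bI = "\<lambda>k. \<psi> (I (a + int k))" and ?bJ = "\<lambda>k. - \<psi> (J (a + int k))"
    have kleI: "k \<le> r" if "\<psi> (I (a + int k)) \<noteq> 0" for k
    proof (rule ccontr)
      assume "\<not> k \<le> r"
      then have "a + int k \<ge> int (m + n)" using rn by (simp add: a_def)
      then show False using that W.psiI0 by blast
    qed
    have kleJ: "k \<le> r" if "\<psi> (J (a + int k)) \<noteq> 0" for k
    proof (rule ccontr)
      assume "\<not> k \<le> r"
      then have "a + int k \<ge> int (m + n)" using rn by (simp add: a_def)
      then show False using that W.psiJ0 by blast
    qed
    have "has_deg n sc \<rho> w (W.DD (H a) v) (j - eps r, i)"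
    proof (rule has_deg_from[OF co fT])
      show "finite {((j, i), r, False)}" by simp
      show "\<forall>t\<in>{((j, i), r, False)}. ff t = (j - eps r, i)" by (simp add: ff_def)
      show "\<forall>t\<in>{((j, i), r, False)}. t \<notin> ?T \<longrightarrow> aa c ?bI ?bJ t = 0" using cji rn by simp
      have "a + int r = int (m + n - 1)" using rn by (simp add: a_def)
      then show "sum (aa c ?bI ?bJ) {((j, i), r, False)} \<noteq> 0"
        using cji jr psiJt by (simp add: aa_def)
      show "\<forall>t\<in>?T. aa c ?bI ?bJ t \<noteq> 0 \<longrightarrow> t \<in> {((j, i), r, False)} \<or> pair_gt n (j - eps r, i) (ff t)"
      proof (intro ballI impI)
        fix t assume t: "t \<in> ?T" "aa c ?bI ?bJ t \<noteq> 0"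
        obtain p1 p2 k b where tt: "t = ((p1, p2), k, b)" by (cases t) auto
        have cp: "c (p1, p2) \<noteq> 0" using t tt by simp
        have pidx: "p1 \<in> idx n" "p2 \<in> idx n" using supp cp by auto
        have pg: "(p1, p2) = (j, i) \<or> pair_gt n (j, i) (p1, p2)" using top cp by blast
        have pos: "if b then p2 k > 0 else p1 k > 0"
          using t(2) by (cases b) (auto simp: tt aa_def)
        have kr: "k \<le> r"
          using t(2) kleI[of k] kleJ[of k] by (cases b) (auto simp: tt aa_def)
        from key1[OF ji rn _ pidx pg kr pos] jr
        show "t \<in> {((j, i), r, False)} \<or> pair_gt n (j - eps r, i) (ff t)" by (auto simp: tt)
      qed
    qed
    then show "let r = (LEAST k. j k \<noteq> 0) in
              has_deg n sc \<rho> w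
                (\<rho> (H (int (m + n - 1 - r))) v - sc (\<psi> (H (int (m + n - 1 - r)))) v)
                (j - eps r, i)"
      unfolding Let_def r_def[symmetric] a_def W.DD_def .
  next
    assume ji0: "j = (\<lambda>_. 0) \<and> i \<noteq> (\<lambda>_. 0)"
    then have j0: "j = (\<lambda>_. 0)" and inz: "i \<noteq> (\<lambda>_. 0)" by auto
    define s where "s = (GREATEST k. i k \<noteq> 0)"
    obtain k0 where k0: "i k0 \<noteq> 0" using inz by auto
    have iz: "\<forall>k\<ge>n. i k = 0" using ji(2) by (simp add: idx_def)
    have bnd: "\<And>y. i y \<noteq> 0 \<Longrightarrow> y \<le> n"
    proof (rule ccontr)
      fix y assume "i y \<noteq> 0" "\<not> y \<le> n"
      then show False using iz by simp
    qed
    have is0: "i s \<noteq> 0" unfolding s_def by (rule GreatestI_nat[of "\<lambda>k. i k \<noteq> 0" k0 n, OF k0 bnd])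
    have sgt: "\<forall>k>s. i k = 0"
    proof (intro allI impI)
      fix k assume ks: "k > s"
      show "i k = 0"
      proof (rule ccontr)
        assume "i k \<noteq> 0"
        then have "k \<le> s" unfolding s_def by (rule Greatest_le_nat[of "\<lambda>k. i k \<noteq> 0" k n, OF _ bnd])
        with ks show False by simp
      qed
    qed
    have sn: "s < n"
    proof (rule ccontr)
      assume "\<not> s < n" then have "i s = 0" using iz by simp
      with is0 show False by simp
    qed
    define a where "a = int (m + n - 1 - s)"
    have am: "a \<ge> int m" using sn by (simp add: a_def)
    have as: "a + int s = int (m + n - 1)" using sn by (simp add: a_def)
    have kleI: "k \<le> s" if "\<psi> (I (a + int k)) \<noteq> 0" for k
    proof (rule ccontr)
      assume "\<not> k \<le> s"
      then have "a + int k \<ge> int (m + n)" using sn by (simp add: a_def)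
      then show False using that W.psiI0 by blast
    qed
    have kleJ: "k \<le> s" if "\<psi> (J (a + int k)) \<noteq> 0" for k
    proof (rule ccontr)
      assume "\<not> k \<le> s"
      then have "a + int k \<ge> int (m + n)" using sn by (simp add: a_def)
      then show False using that W.psiJ0 by blast
    qed
    define d :: complex where "d = of_int (int s - a)"
    have di: "int s - a \<noteq> 0" using sn assms(2) by (simp add: a_def)
    have d0: "d \<noteq> 0" unfolding d_def of_int_eq_0_iff by (rule di)
    define t0 where "t0 = (((\<lambda>_::nat. 0::nat), i), s, True)"
    define t1 where "t1 = ((eps s, i - eps s), s, False)"
    let ?B = "{t0, t1}"
    have t01: "t0 \<noteq> t1" by (simp add: t0_def t1_def)
    have ffB: "\<forall>t\<in>?B. ff t = ((\<lambda>_. 0), i - eps s)"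
      by (simp add: t0_def t1_def ff_def fun_eq_iff eps_def)
    have gen: "has_deg n sc \<rho> w (W.DD x v) ((\<lambda>_. 0), i - eps s)"
      if xG: "in_G m 0 x"
        and hI: "\<forall>u\<in>W.SS. \<forall>k. \<rho> x (\<rho> (I (int k)) u) - \<rho> (I (int k)) (\<rho> x u) = sc (bI k) u"
        and hJ: "\<forall>u\<in>W.SS. \<forall>k. \<rho> x (\<rho> (J (int k)) u) - \<rho> (J (int k)) (\<rho> x u) = sc (bJ k) u"
        and Dw: "W.DD x w = 0"
        and bIz: "\<And>k. bI k \<noteq> 0 \<Longrightarrow> k \<le> s" and bJz: "\<And>k. bJ k \<noteq> 0 \<Longrightarrow> k \<le> s"
        and nz: "aa c bI bJ t0 + aa c bI bJ t1 \<noteq> 0"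
      for x bI bJ
    proof (rule has_deg_from[OF W.Dv[OF xG hI hJ Dw rc] fT])
      show "finite ?B" by simp
      show "\<forall>t\<in>?B. ff t = ((\<lambda>_. 0), i - eps s)" by (rule ffB)
      show "\<forall>t\<in>?B. t \<notin> ?T \<longrightarrow> aa c bI bJ t = 0" using sn by (auto simp: t0_def t1_def aa_def)
      show "sum (aa c bI bJ) ?B \<noteq> 0" using nz t01 by simp
      show "\<forall>t\<in>?T. aa c bI bJ t \<noteq> 0 \<longrightarrow> t \<in> ?B \<or> pair_gt n ((\<lambda>_. 0), i - eps s) (ff t)"
      proof (intro ballI impI)
        fix t assume t: "t \<in> ?T" "aa c bI bJ t \<noteq> 0"
        obtain p1 p2 k b where tt: "t = ((p1, p2), k, b)" by (cases t) auto
        have cp: "c (p1, p2) \<noteq> 0" using t tt by simp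
        have pidx: "p1 \<in> idx n" "p2 \<in> idx n" using supp cp by auto
        have pg: "(p1, p2) = ((\<lambda>_. 0), i) \<or> pair_gt n ((\<lambda>_. 0), i) (p1, p2)" using top cp j0 by blast
        have pos: "if b then p2 k > 0 else p1 k > 0"
          using t(2) by (cases b) (auto simp: tt aa_def)
        have kr: "k \<le> s"
          using t(2) bIz[of k] bJz[of k] by (cases b) (auto simp: tt aa_def)
        from key2[OF ji(2) sn _ sgt pidx pg kr pos] is0
        show "t \<in> ?B \<or> pair_gt n ((\<lambda>_. 0), i - eps s) (ff t)" by (auto simp: tt t0_def t1_def)
      qed
    qed
    define Y where "Y = c ((\<lambda>_. 0), i) * (of_nat (i s) * \<psi> (I (int (m + n - 1))))"
    define Xv where "Xv = c (eps s, i - eps s) * \<psi> (J (int (m + n - 1)))"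
    have Y0: "Y \<noteq> 0" using cji j0 is0 psiIt by (simp add: Y_def)
    have a0: "aa c bI bJ t0 = c ((\<lambda>_. 0), i) * (of_nat (i s) * bI s)" for bI bJ
      by (simp add: aa_def t0_def)
    have a1: "aa c bI bJ t1 = c (eps s, i - eps s) * bJ s" for bI bJ
      by (simp add: aa_def t1_def eps_apply)
    have eH: "aa c (\<lambda>k. \<psi> (I (a + int k))) (\<lambda>k. - \<psi> (J (a + int k))) t0
            + aa c (\<lambda>k. \<psi> (I (a + int k))) (\<lambda>k. - \<psi> (J (a + int k))) t1 = Y - Xv"
      unfolding a0 a1 Y_def Xv_def as by simp
    have eL: "aa c (\<lambda>k. of_int (int k - a) * \<psi> (I (a + int k))) (\<lambda>k. of_int (int k - a) * \<psi> (J (a + int k))) t0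
            + aa c (\<lambda>k. of_int (int k - a) * \<psi> (I (a + int k))) (\<lambda>k. of_int (int k - a) * \<psi> (J (a + int k))) t1
            = d * (Y + Xv)"
      unfolding a0 a1 Y_def Xv_def as d_def[symmetric] by (simp add: distrib_left mult.left_commute)
    have "Y - Xv \<noteq> 0 \<or> d * (Y + Xv) \<noteq> 0"
    proof (rule ccontr)
      assume "\<not> ?thesis"
      then have "Y - Xv = 0" "Y + Xv = 0" using d0 by auto
      then have e1: "Y = Xv" and e2: "Y + Xv = 0" by (simp_all only: right_minus_eq)
      have "Y + Y = 0" using e2 unfolding e1[symmetric] .
      then have "2 * Y = 0" by (simp only: mult_2)
      then show False using Y0 by simp
    qed
    then have "has_deg n sc \<rho> w (W.DD (H a) v) ((\<lambda>_. 0), i - eps s)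
             \<or> has_deg n sc \<rho> w (W.DD (L a) v) ((\<lambda>_. 0), i - eps s)"
    proof
      assume YX: "Y - Xv \<noteq> 0"
      have "has_deg n sc \<rho> w (W.DD (H a) v) ((\<lambda>_. 0), i - eps s)"
      proof (rule gen[OF _ W.hI_H[OF am] W.hJ_H[OF am] W.Dw_H[OF am]])
        show "in_G m 0 (H a)" using am by simp
        show "k \<le> s" if "\<psi> (I (a + int k)) \<noteq> 0" for k using kleI[OF that] .
        show "k \<le> s" if "- \<psi> (J (a + int k)) \<noteq> 0" for k using kleJ[of k] that by simp
        show "aa c (\<lambda>k. \<psi> (I (a + int k))) (\<lambda>k. - \<psi> (J (a + int k))) t0
            + aa c (\<lambda>k. \<psi> (I (a + int k))) (\<lambda>k. - \<psi> (J (a + int k))) t1 \<noteq> 0"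
          unfolding eH by (rule YX)
      qed
      then show ?thesis by blast
    next
      assume YX: "d * (Y + Xv) \<noteq> 0"
      have "has_deg n sc \<rho> w (W.DD (L a) v) ((\<lambda>_. 0), i - eps s)"
      proof (rule gen[OF _ W.hI_L[OF am] W.hJ_L[OF am] W.Dw_L[OF am]])
        show "in_G m 0 (L a)" using am by simp
        show "k \<le> s" if "of_int (int k - a) * \<psi> (I (a + int k)) \<noteq> 0" for k using kleI[of k] that by simp
        show "k \<le> s" if "of_int (int k - a) * \<psi> (J (a + int k)) \<noteq> 0" for k using kleJ[of k] that by simp
        show "aa c (\<lambda>k. of_int (int k - a) * \<psi> (I (a + int k))) (\<lambda>k. of_int (int k - a) * \<psi> (J (a + int k))) t0
            + aa c (\<lambda>k. of_int (int k - a) * \<psi> (I (a + int k))) (\<lambda>k. of_int (int k - a) * \<psi> (J (a + int k))) t1 \<noteq> 0"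
          unfolding eL by (rule YX)
      qed
      then show ?thesis by blast
    qed
    then show "let s = (GREATEST k. i k \<noteq> 0) in
              has_deg n sc \<rho> w
                (\<rho> (H (int (m + n - 1 - s))) v - sc (\<psi> (H (int (m + n - 1 - s)))) v)
                ((\<lambda>_. 0), i - eps s)
            \<or> has_deg n sc \<rho> w
                (\<rho> (L (int (m + n - 1 - s))) v - sc (\<psi> (L (int (m + n - 1 - s)))) v)
                ((\<lambda>_. 0), i - eps s)"
      unfolding Let_def s_def[symmetric] a_def W.DD_def .
  qed
qed

end
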